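(* Let $n\geq 2$ and let $K\subset\mathbb{R}^n$ be a convex body with $\mathrm{r}_2(K)>0$. Then \[ \frac{\mathrm{R}_{n-1}(K)}{\mathrm{r}_2(K)}\leq 2\sqrt{2}\sqrt{\frac{n-1}{n}}. \]
   Context: A convex body is a compact convex subset of $\mathbb{R}^n$. For $1\le i\le n$, let $\mathcal{L}^n_i$ be the set of $i$-dimensional linear subspaces of $\mathbb{R}^n$, $K|L$ the orthogonal projection of $K$ onto $L$, $L^\perp$ the orthogonal complement. For a set $C$ contained in an affine subspace $A$, $\mathrm{R}(C;A)$ and $\mathrm{r}(C;A)$ denote the Euclidean circumradius and inradius of $C$ measured within $A$. Define $\mathrm{R}_i(K)=\min_{L\in\mathcal{L}^n_i}\mathrm{R}(K|L;L)$ and $\mathrm{r}_i(K)=\max_{L\in\mathcal{L}^n_i}\max_{x\in L^\perp}\mathrm{r}(K\cap(x+L);x+L)$. *)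

theory Defs
  imports "HOL-Analysis.Analysis"
begin

definition convex_body :: "'a::euclidean_space set \<Rightarrow> bool" where
  "convex_body K \<longleftrightarrow> compact K \<and> convex K"

definition lin_subspaces :: "nat \<Rightarrow> 'a::euclidean_space set set" where
  "lin_subspaces i = {L. subspace L \<and> dim L = i}"

definition orth_compl :: "'a::euclidean_space set \<Rightarrow> 'a set" where
  "orth_compl L = {x. \<forall>v\<in>L. inner x v = 0}"

definition proj_onto :: "'a::euclidean_space set \<Rightarrow> 'a set \<Rightarrow> 'a set" where
  "proj_onto K L = {y \<in> L. \<exists>x\<in>K. x - y \<in> orth_compl L}"

definition circumradius_in :: "'a::euclidean_space set \<Rightarrow> 'a set \<Rightarrow> real" where
  "circumradius_in C A = Inf {r. \<exists>c\<in>A. C \<subseteq> cball c r}"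

definition inradius_in :: "'a::euclidean_space set \<Rightarrow> 'a set \<Rightarrow> real" where
  "inradius_in C A = Sup {r. 0 \<le> r \<and> (\<exists>c\<in>A. cball c r \<inter> A \<subseteq> C)}"

definition outer_radius :: "nat \<Rightarrow> 'a::euclidean_space set \<Rightarrow> real" where
  "outer_radius i K = Inf ((\<lambda>L. circumradius_in (proj_onto K L) L) ` lin_subspaces i)"

definition inner_radius :: "nat \<Rightarrow> 'a::euclidean_space set \<Rightarrow> real" where
  "inner_radius i K = Sup {inradius_in (K \<inter> ((+) x ` L)) ((+) x ` L) | L x.
                            L \<in> lin_subspaces i \<and> x \<in> orth_compl L}"

end

theory Submission
  imports Defs
begin

lemma jung_comp:
  fixes F :: "'a::euclidean_space set" and l :: "'a \<Rightarrow> real"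
  assumes fin: "finite F" and card: "card F \<le> m" and mpos: "m > 0"
    and lpos: "\<forall>x\<in>F. 0 \<le> l x" and lsum: "sum l F = 1"
    and cdef: "(\<Sum>x\<in>F. l x *\<^sub>R x) = c"
    and R: "\<forall>x\<in>F. dist x c = R" and D: "\<forall>x\<in>F. \<forall>y\<in>F. dist x y \<le> D"
  shows "2 * R^2 \<le> D^2 * (1 - 1 / real m)"
proof -
  have z: "(\<Sum>x\<in>F. l x *\<^sub>R (x - c)) = 0"
    by (simp add: scaleR_diff_right sum_subtractf cdef flip: scaleR_left.sum add: lsum)
  have e1: "\<And>x y. (norm (x - y))^2 = (norm (x - c))^2 + (norm (y - c))^2 - 2 * ((x - c) \<bullet> (y - c))"
    by (simp add: power2_norm_eq_inner inner_diff_left inner_diff_right inner_commute algebra_simps)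
  have "(\<Sum>x\<in>F. \<Sum>y\<in>F. l x * l y * (norm (x - y))^2)
      = (\<Sum>x\<in>F. \<Sum>y\<in>F. l x * l y * (2 * R^2)) - 2 * ((\<Sum>x\<in>F. l x *\<^sub>R (x - c)) \<bullet> (\<Sum>y\<in>F. l y *\<^sub>R (y - c)))"
  proof -
    have "(\<Sum>x\<in>F. \<Sum>y\<in>F. l x * l y * (norm (x - y))^2)
       = (\<Sum>x\<in>F. \<Sum>y\<in>F. l x * l y * (2 * R^2) - 2 * (l x * l y * ((x - c) \<bullet> (y - c))))"
      apply (rule sum.cong[OF refl])+
      using R by (simp add: e1 dist_norm algebra_simps)
    also have "\<dots> = (\<Sum>x\<in>F. \<Sum>y\<in>F. l x * l y * (2 * R^2)) - 2 * (\<Sum>x\<in>F. \<Sum>y\<in>F. l x * l y * ((x - c) \<bullet> (y - c)))"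
      by (simp add: sum_subtractf sum_distrib_left)
    also have "(\<Sum>x\<in>F. \<Sum>y\<in>F. l x * l y * ((x - c) \<bullet> (y - c))) = (\<Sum>x\<in>F. l x *\<^sub>R (x - c)) \<bullet> (\<Sum>y\<in>F. l y *\<^sub>R (y - c))"
      unfolding inner_sum_left inner_sum_right by (simp add: mult.assoc) (subst sum.swap, simp add: mult.left_commute)
    finally show ?thesis .
  qed
  also have "\<dots> = 2 * R^2"
    using z by (simp add: sum_distrib_left[symmetric] sum_distrib_right[symmetric] lsum)
  finally have id: "(\<Sum>x\<in>F. \<Sum>y\<in>F. l x * l y * (norm (x - y))^2) = 2 * R^2" .
  have "(\<Sum>x\<in>F. \<Sum>y\<in>F. l x * l y * (norm (x - y))^2) \<le> (\<Sum>x\<in>F. \<Sum>y\<in>F. l x * l y * (D^2 - (if x = y then D^2 else 0)))"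
  proof (rule sum_mono, rule sum_mono)
    fix x y assume xy: "x \<in> F" "y \<in> F"
    have "(norm (x - y))^2 \<le> D^2 - (if x = y then D^2 else 0)"
    proof (cases "x = y")
      case False
      have "0 \<le> norm (x - y)" by simp
      moreover have "norm (x - y) \<le> D" using D xy by (simp add: dist_norm)
      ultimately show ?thesis using False by (simp add: power_mono)
    qed simp
    moreover have "0 \<le> l x * l y" using lpos xy by simp
    ultimately show "l x * l y * (norm (x - y))^2 \<le> l x * l y * (D^2 - (if x = y then D^2 else 0))"
      by (rule mult_left_mono)
  qed
  also have "\<dots> = (\<Sum>x\<in>F. l x * D^2 - (l x)^2 * D^2)"
  proof (rule sum.cong[OF refl])
    fix x assume x: "x \<in> F"
    have "(\<Sum>y\<in>F. l x * l y * (D^2 - (if x = y then D^2 else 0)))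
        = (\<Sum>y\<in>F. l x * l y * D^2) - (\<Sum>y\<in>F. (if x = y then l x * l y * D^2 else 0))"
      unfolding sum_subtractf[symmetric] by (rule sum.cong) auto
    also have "\<dots> = l x * D^2 - (l x)^2 * D^2"
      using x fin by (simp add: sum_distrib_left[symmetric] sum_distrib_right[symmetric] lsum power2_eq_square)
    finally show "(\<Sum>y\<in>F. l x * l y * (D^2 - (if x = y then D^2 else 0))) = l x * D^2 - (l x)^2 * D^2" .
  qed
  also have "\<dots> = D^2 * (1 - (\<Sum>x\<in>F. (l x)^2))"
    by (simp add: sum_subtractf sum_distrib_right[symmetric] sum_distrib_left lsum algebra_simps)
  finally have ub: "2 * R^2 \<le> D^2 * (1 - (\<Sum>x\<in>F. (l x)^2))" using id by simp
  have "1 = (\<Sum>x\<in>F. 1 * l x)^2" using lsum by simp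
  also have "\<dots> \<le> (\<Sum>x\<in>F. 1^2) * (\<Sum>x\<in>F. (l x)^2)" by (rule Cauchy_Schwarz_ineq_sum)
  also have "\<dots> \<le> real m * (\<Sum>x\<in>F. (l x)^2)"
    using card by (intro mult_right_mono) (auto intro: sum_nonneg)
  finally have "1 / real m \<le> (\<Sum>x\<in>F. (l x)^2)" using mpos by (simp add: field_simps)
  then have "D^2 * (1 - (\<Sum>x\<in>F. (l x)^2)) \<le> D^2 * (1 - 1 / real m)"
    by (intro mult_left_mono) auto
  with ub show ?thesis by linarith
qed


lemma jung:
  fixes S :: "'a::euclidean_space set"
  assumes cS: "compact S" and ne: "S \<noteq> {}" and ad: "aff_dim S \<le> int d"
    and D: "\<forall>x\<in>S. \<forall>y\<in>S. dist x y \<le> D"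
  shows "\<exists>c\<in>convex hull S. \<forall>s\<in>S. dist c s \<le> sqrt (real d / (2 * (real d + 1))) * D"
proof -
  obtain s0 where s0: "s0 \<in> S" using ne by auto
  have D0: "0 \<le> D" using D s0 by force
  define f where "f x = Sup ((\<lambda>s. dist x s) ` S)" for x
  have bdd: "bdd_above ((\<lambda>s. dist x s) ` S)" for x
  proof (rule bdd_aboveI2)
    fix s assume "s \<in> S"
    then show "dist x s \<le> dist x s0 + D" using D s0 dist_triangle[of x s s0]
      by (metis add_left_mono dist_commute order_trans)
  qed
  have fge: "dist x s \<le> f x" if "s \<in> S" for x s
    unfolding f_def using that bdd by (intro cSup_upper) auto
  have fle: "f x \<le> r" if "\<forall>s\<in>S. dist x s \<le> r" for x r
    unfolding f_def using that ne by (intro cSup_least) auto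
  have fatt: "\<exists>s\<in>S. f x = dist x s" for x
  proof -
    have "continuous_on S (dist x)" by (intro continuous_intros)
    then obtain s where "s \<in> S" "\<forall>y\<in>S. dist x y \<le> dist x s"
      using continuous_attains_sup[OF cS ne] by blast
    then show ?thesis using fge fle by (metis order_antisym)
  qed
  have lip: "f x \<le> dist x y + f y" for x y
    by (rule fle) (metis add_left_mono dist_triangle fge order_trans)
  have "1-lipschitz_on UNIV f"
  proof (rule lipschitz_onI)
    fix x y :: 'a
    show "dist (f x) (f y) \<le> 1 * dist x y"
      using lip[of x y] lip[of y x] by (simp add: dist_real_def dist_commute abs_le_iff)
  qed simp
  then have contf: "continuous_on UNIV f" by (rule lipschitz_on_continuous_on)
  obtain c where c: "c \<in> cball s0 D" "\<forall>y\<in>cball s0 D. f c \<le> f y"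
    using continuous_attains_inf[OF compact_cball, of s0 D f] D0 contf
    by (metis centre_in_cball continuous_on_subset empty_iff subset_UNIV)
  have fs0: "f s0 \<le> D" using D s0 by (intro fle) auto
  have cmin: "f c \<le> f y" for y
  proof (cases "y \<in> cball s0 D")
    case False
    then have "D < dist s0 y" by simp
    also have "\<dots> \<le> f y" using fge[OF s0, of y] by (simp add: dist_commute)
    moreover have "f c \<le> f s0" using c(2) D0 by simp
    ultimately show ?thesis using fs0 by linarith
  qed (use c in auto)
  define R where "R = f c"
  define T where "T = {s\<in>S. dist c s = R}"
  have TS: "T \<subseteq> S" unfolding T_def by auto
  have Tne: "T \<noteq> {}" using fatt[of c] unfolding T_def R_def by auto
  have cT: "compact T"
  proof -
    have "closed {s. dist c s = R}"
      by (intro closed_Collect_eq continuous_intros)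
    then have "compact (S \<inter> {s. dist c s = R})" using cS by auto
    moreover have "T = S \<inter> {s. dist c s = R}" unfolding T_def by auto
    ultimately show ?thesis by simp
  qed
  have cin: "c \<in> convex hull T"
  proof (rule ccontr)
    assume nc: "c \<notin> convex hull T"
    have "\<exists>a b. a \<bullet> c < b \<and> (\<forall>x\<in>convex hull T. a \<bullet> x > b)"
      by (rule separating_hyperplane_closed_point[OF convex_convex_hull compact_imp_closed[OF compact_convex_hull[OF cT]] nc])
    then obtain a b where ab: "a \<bullet> c < b" "\<forall>x\<in>convex hull T. a \<bullet> x > b"
      by blast
    have aT: "\<forall>t\<in>T. a \<bullet> t > b" using ab(2) hull_subset[of T convex] by auto
    have a0: "a \<noteq> 0" using aT Tne ab(1) by auto
    define \<eta> where "\<eta> = b - a \<bullet> c"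
    have eta: "\<eta> > 0" using ab(1) unfolding \<eta>_def by simp
    define S1 where "S1 = {s\<in>S. a \<bullet> s \<le> a \<bullet> c + \<eta> / 2}"
    have RS: "\<forall>s\<in>S. dist c s \<le> R" unfolding R_def using fge by auto
    have "\<exists>R1<R. \<forall>s\<in>S1. dist c s \<le> R1"
    proof (cases "S1 = {}")
      case True then show ?thesis by (intro exI[of _ "R - 1"]) auto
    next
      case False
      have "closed {s. a \<bullet> s \<le> a \<bullet> c + \<eta> / 2}"
        by (intro closed_Collect_le continuous_intros)
      then have "compact (S \<inter> {s. a \<bullet> s \<le> a \<bullet> c + \<eta> / 2})" using cS by auto
      moreover have "S1 = S \<inter> {s. a \<bullet> s \<le> a \<bullet> c + \<eta> / 2}" unfolding S1_def by auto
      ultimately have cS1: "compact S1" by simp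
      have "continuous_on S1 (dist c)" by (intro continuous_intros)
      then obtain s1 where s1: "s1 \<in> S1" "\<forall>y\<in>S1. dist c y \<le> dist c s1"
        using continuous_attains_sup[OF cS1 False] by blast
      have "a \<bullet> s1 \<le> a \<bullet> c + (b - a \<bullet> c) / 2" using s1(1) unfolding S1_def \<eta>_def by auto
      then have "a \<bullet> s1 < b" using ab(1) by (simp add: field_simps)
      then have "s1 \<notin> T" using aT by force
      moreover have "s1 \<in> S" using s1(1) unfolding S1_def by auto
      ultimately have "dist c s1 < R" using RS unfolding T_def by force
      then show ?thesis using s1 by blast
    qed
    then obtain R1 where R1: "R1 < R" "\<forall>s\<in>S1. dist c s \<le> R1" by blast
    have na: "norm a > 0" using a0 by simp
    define t where "t = min (\<eta> / (2 * (norm a)^2)) ((R - R1) / (2 * norm a))"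
    have t0: "t > 0" unfolding t_def using eta na R1 by auto
    have t1: "t * (norm a)^2 \<le> \<eta> / 2"
      using na unfolding t_def by (simp add: min_def field_simps)
    have t2: "t * norm a \<le> (R - R1) / 2"
      using na unfolding t_def by (simp add: min_def field_simps)
    define c' where "c' = c + t *\<^sub>R a"
    have lt: "dist c' s < R" if s: "s \<in> S" for s
    proof (cases "s \<in> S1")
      case True
      have "dist c' s \<le> dist c' c + dist c s" by (rule dist_triangle)
      also have "dist c' c = t * norm a" unfolding c'_def using t0 by (simp add: dist_norm)
      finally show ?thesis using R1(1) R1(2)[rule_format, OF True] t2 by argo
    next
      case False
      then have as: "a \<bullet> (s - c) > \<eta> / 2" using s unfolding S1_def by (auto simp: inner_diff_right)
      have e1: "dist c' s = norm ((s - c) - t *\<^sub>R a)"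
      proof -
        have "c + t *\<^sub>R a - s = - ((s - c) - t *\<^sub>R a)" by (simp add: algebra_simps)
        then show ?thesis unfolding c'_def dist_norm by (simp only: norm_minus_cancel)
      qed
      have "(dist c' s)^2 = (norm (s - c))^2 - 2 * t * (a \<bullet> (s - c)) + t^2 * (norm a)^2"
        unfolding e1 power2_norm_eq_inner
        by (simp add: inner_diff_left inner_diff_right inner_commute algebra_simps power2_eq_square)
      also have "\<dots> < R^2 - t * \<eta> + t * (t * (norm a)^2)"
      proof -
        have "(norm (s - c))^2 \<le> R^2"
          using RS s by (metis dist_norm dist_commute norm_ge_zero power_mono)
        moreover have "2 * t * (a \<bullet> (s - c)) > t * \<eta>" using as t0 by simp
        ultimately show ?thesis by (simp add: power2_eq_square algebra_simps)
      qed
      also have "\<dots> \<le> R^2 - t * \<eta> + t * (\<eta> / 2)"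
        using t1 t0 by (intro add_left_mono mult_left_mono) auto
      also have "\<dots> \<le> R^2" using t0 eta by simp
      finally have "(dist c' s)^2 < R^2" .
      moreover have "0 \<le> R" using RS s by (meson zero_le_dist order_trans)
      ultimately show ?thesis by (rule power2_less_imp_less)
    qed
    obtain s' where "s' \<in> S" "f c' = dist c' s'" using fatt by blast
    then have "f c' < f c" using lt unfolding R_def by auto
    with cmin show False by (simp add: not_less[symmetric])
  qed
  obtain F where F: "finite F" "F \<subseteq> T" "card F \<le> aff_dim T + 1" "c \<in> convex hull F"
    using cin caratheodory_aff_dim[of T] by blast
  have "aff_dim T \<le> int d" using aff_dim_subset[OF TS] ad by linarith
  then have cardF: "card F \<le> d + 1" using F(3) by linarith
  obtain l where l: "\<forall>x\<in>F. 0 \<le> l x" "sum l F = 1" "(\<Sum>x\<in>F. l x *\<^sub>R x) = c"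
    using F(4) convex_hull_finite[OF F(1)] by auto
  have RT: "\<forall>x\<in>F. dist x c = R" using F(2) unfolding T_def by (auto simp: dist_commute)
  have DF: "\<forall>x\<in>F. \<forall>y\<in>F. dist x y \<le> D" using F(2) TS D by blast
  have "2 * R^2 \<le> D^2 * (1 - 1 / real (d + 1))"
    by (rule jung_comp[OF F(1) cardF _ l RT DF]) simp
  also have "\<dots> = 2 * ((sqrt (real d / (2 * (real d + 1))) * D)^2)"
    by (simp add: power_mult_distrib field_simps)
  finally have "R^2 \<le> (sqrt (real d / (2 * (real d + 1))) * D)^2" by simp
  then have Rle: "R \<le> sqrt (real d / (2 * (real d + 1))) * D"
    by (rule power2_le_imp_le) (use D0 in simp)
  have "c \<in> convex hull S" using cin hull_mono[OF TS] by blast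
  moreover have "\<forall>s\<in>S. dist c s \<le> R" unfolding R_def using fge by auto
  ultimately show ?thesis using Rle by force
qed

lemma proj_nonempty:
  fixes K L :: "'a::euclidean_space set"
  assumes "subspace L" "x \<in> K"
  shows "proj_onto K L \<noteq> {}"
proof -
  obtain y z where yz: "y \<in> span L" "\<And>w. w \<in> span L \<Longrightarrow> orthogonal z w" "x = y + z"
    using orthogonal_subspace_decomp_exists[of L x] by metis
  have "y \<in> L" using yz(1) assms(1) by (metis span_eq_iff)
  moreover have "x - y \<in> orth_compl L"
    unfolding orth_compl_def using yz(2,3) span_superset by (fastforce simp: orthogonal_def)
  ultimately show ?thesis using assms(2) unfolding proj_onto_def by blast
qed

lemma proj_norm:
  fixes K L :: "'a::euclidean_space set"
  assumes "subspace L" "y \<in> proj_onto K L"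
  shows "\<exists>x\<in>K. norm y \<le> norm x"
proof -
  obtain x where x: "x \<in> K" "y \<in> L" "x - y \<in> orth_compl L"
    using assms(2) unfolding proj_onto_def by blast
  have o: "(x - y) \<bullet> y = 0" using x unfolding orth_compl_def by auto
  have "(norm x)^2 = (norm y)^2 + (norm (x - y))^2"
  proof -
    have "x = y + (x - y)" by simp
    then have "(norm x)^2 = (norm (y + (x - y)))^2" by simp
    also have "\<dots> = (norm y)^2 + (norm (x - y))^2"
      using o by (intro norm_add_Pythagorean) (simp add: inner_commute orthogonal_def)
    finally show ?thesis .
  qed
  then have "(norm y)^2 \<le> (norm x)^2" by simp
  then have "norm y \<le> norm x" by (rule power2_le_imp_le) simp
  then show ?thesis using x(1) by blast
qed

lemma circ_nonneg:
  fixes C A :: "'a::euclidean_space set"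
  assumes "C \<noteq> {}" "C \<subseteq> cball 0 B" "0 \<in> A"
  shows "0 \<le> circumradius_in C A"
  unfolding circumradius_in_def
proof (rule cInf_greatest)
  show "{r. \<exists>c\<in>A. C \<subseteq> cball c r} \<noteq> {}" using assms by blast
  fix r assume "r \<in> {r. \<exists>c\<in>A. C \<subseteq> cball c r}"
  then obtain c where "C \<subseteq> cball c r" by blast
  then show "0 \<le> r" using assms(1) by (metis all_not_in_conv cball_empty not_le subset_empty)
qed

lemma circ_le:
  fixes C A :: "'a::euclidean_space set"
  assumes "C \<noteq> {}" "c \<in> A" "C \<subseteq> cball c r"
  shows "circumradius_in C A \<le> r"
  unfolding circumradius_in_def
proof (rule cInf_lower)
  show "r \<in> {r. \<exists>c\<in>A. C \<subseteq> cball c r}" using assms by blast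
  show "bdd_below {r. \<exists>c\<in>A. C \<subseteq> cball c r}"
  proof (rule bdd_belowI)
    fix r assume "r \<in> {r. \<exists>c\<in>A. C \<subseteq> cball c r}"
    then obtain c where "C \<subseteq> cball c r" by blast
    then show "0 \<le> r" using assms(1) by (metis all_not_in_conv cball_empty not_le subset_empty)
  qed
qed

lemma outer_le:
  fixes K H :: "'a::euclidean_space set"
  assumes "K \<noteq> {}" "K \<subseteq> cball 0 B" "H \<in> lin_subspaces i" "c \<in> H"
    "proj_onto K H \<subseteq> cball c r"
  shows "outer_radius i K \<le> r"
proof -
  have pb: "proj_onto K L \<subseteq> cball 0 B" if sL: "subspace L" for L
  proof
    fix y assume "y \<in> proj_onto K L"
    then obtain x where "x \<in> K" "norm y \<le> norm x" using proj_norm[OF sL, of y K] by blast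
    then show "y \<in> cball 0 B" using assms(2) by (auto simp: subset_iff)
  qed
  have "outer_radius i K \<le> circumradius_in (proj_onto K H) H"
    unfolding outer_radius_def
  proof (rule cInf_lower)
    show "circumradius_in (proj_onto K H) H \<in> (\<lambda>L. circumradius_in (proj_onto K L) L) ` lin_subspaces i"
      using assms(3) by blast
    show "bdd_below ((\<lambda>L. circumradius_in (proj_onto K L) L) ` lin_subspaces i)"
    proof (rule bdd_belowI2)
      fix L :: "'a set" assume "L \<in> lin_subspaces i"
      then have sL: "subspace L" unfolding lin_subspaces_def by auto
      show "0 \<le> circumradius_in (proj_onto K L) L"
        by (rule circ_nonneg[OF _ pb[OF sL]]) (use assms(1) proj_nonempty[OF sL] sL subspace_0 in auto)
    qed
  qed
  also have "\<dots> \<le> r"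
    using assms(3,4,5) assms(1) proj_nonempty unfolding lin_subspaces_def
    by (intro circ_le) auto
  finally show ?thesis .
qed

lemma inrad_member_bound:
  fixes K L C :: "'a::euclidean_space set"
  assumes "subspace L" "v \<in> L" "v \<noteq> 0" "\<forall>x\<in>K. \<forall>y\<in>K. dist x y \<le> Dm" "0 \<le> r"
    "c \<in> (+) x ` L" "cball c r \<inter> (+) x ` L \<subseteq> C" "C \<subseteq> K"
  shows "r \<le> Dm"
proof -
  obtain l where l: "l \<in> L" "c = x + l" using assms(6) by blast
  define c' where "c' = c + (r / norm v) *\<^sub>R v"
  have "c' = x + (l + (r / norm v) *\<^sub>R v)" unfolding c'_def l by simp
  moreover have "l + (r / norm v) *\<^sub>R v \<in> L"
    using assms(1,2) l(1) by (simp add: subspace_add subspace_scale)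
  ultimately have "c' \<in> (+) x ` L" by blast
  moreover have dc: "dist c c' = r" unfolding c'_def using assms(3,5) by (simp add: dist_norm)
  ultimately have "c' \<in> K" using assms(7,8) by auto
  have "c \<in> cball c r" using assms(5) by simp
  then have "c \<in> cball c r \<inter> (+) x ` L" using assms(6) by blast
  then have "c \<in> K" using assms(7,8) by blast
  with \<open>c' \<in> K\<close> show ?thesis using assms(4) dc by force
qed

lemma inner_ge:
  fixes K L :: "'a::euclidean_space set"
  assumes Dm: "\<forall>x\<in>K. \<forall>y\<in>K. dist x y \<le> Dm"
    and L: "L \<in> lin_subspaces 2" and x: "x \<in> orth_compl L" and r0: "0 \<le> r0"
    and c: "c \<in> (+) x ` L" and sub: "cball c r0 \<inter> (+) x ` L \<subseteq> K"
  shows "r0 \<le> inner_radius 2 K"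
proof -
  have nz: "\<exists>v\<in>L'. v \<noteq> 0" if "L' \<in> lin_subspaces 2" for L' :: "'a set"
  proof (rule ccontr)
    assume "\<not> ?thesis"
    then have "L' \<subseteq> {0}" by auto
    then have "dim L' = 0" by (metis dim_eq_0)
    then show False using that unfolding lin_subspaces_def by (simp del: dim_eq_0)
  qed
  have vb: "inradius_in (K \<inter> (+) x' ` L') ((+) x' ` L') \<le> max Dm (Sup {})"
    if L': "L' \<in> lin_subspaces 2" for L' x'
  proof (cases "{r. 0 \<le> r \<and> (\<exists>c\<in>(+) x' ` L'. cball c r \<inter> (+) x' ` L' \<subseteq> K \<inter> (+) x' ` L')} = {}")
    case True then show ?thesis unfolding inradius_in_def by (simp only: True max.cobounded2)
  next
    case False
    obtain v where v: "v \<in> L'" "v \<noteq> 0" using nz[OF L'] by blast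
    have sL': "subspace L'" using L' unfolding lin_subspaces_def by auto
    have "inradius_in (K \<inter> (+) x' ` L') ((+) x' ` L') \<le> Dm"
      unfolding inradius_in_def
    proof (rule cSup_least[OF False])
      fix r assume "r \<in> {r. 0 \<le> r \<and> (\<exists>c\<in>(+) x' ` L'. cball c r \<inter> (+) x' ` L' \<subseteq> K \<inter> (+) x' ` L')}"
      then obtain c where "0 \<le> r" "c \<in> (+) x' ` L'" "cball c r \<inter> (+) x' ` L' \<subseteq> K \<inter> (+) x' ` L'" by blast
      then show "r \<le> Dm" using inrad_member_bound[OF sL' v Dm, of r c x' "K \<inter> (+) x' ` L'"] by blast
    qed
    then show ?thesis by simp
  qed
  have sL: "subspace L" using L unfolding lin_subspaces_def by auto
  obtain v where v: "v \<in> L" "v \<noteq> 0" using nz[OF L] by blast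
  have "r0 \<le> inradius_in (K \<inter> (+) x ` L) ((+) x ` L)"
    unfolding inradius_in_def
  proof (rule cSup_upper)
    show "r0 \<in> {r. 0 \<le> r \<and> (\<exists>c\<in>(+) x ` L. cball c r \<inter> (+) x ` L \<subseteq> K \<inter> (+) x ` L)}"
      using r0 c sub by blast
    show "bdd_above {r. 0 \<le> r \<and> (\<exists>c\<in>(+) x ` L. cball c r \<inter> (+) x ` L \<subseteq> K \<inter> (+) x ` L)}"
    proof (rule bdd_aboveI)
      fix r assume "r \<in> {r. 0 \<le> r \<and> (\<exists>c\<in>(+) x ` L. cball c r \<inter> (+) x ` L \<subseteq> K \<inter> (+) x ` L)}"
      then obtain c where "0 \<le> r" "c \<in> (+) x ` L" "cball c r \<inter> (+) x ` L \<subseteq> K \<inter> (+) x ` L" by blast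
      then show "r \<le> Dm" using inrad_member_bound[OF sL v Dm, of r c x "K \<inter> (+) x ` L"] by blast
    qed
  qed
  also have "\<dots> \<le> inner_radius 2 K"
    unfolding inner_radius_def
  proof (rule cSup_upper)
    show "inradius_in (K \<inter> (+) x ` L) ((+) x ` L) \<in> {inradius_in (K \<inter> (+) x ` L) ((+) x ` L) |L x.
                            L \<in> lin_subspaces 2 \<and> x \<in> orth_compl L}"
      using L x by blast
    show "bdd_above {inradius_in (K \<inter> (+) x ` L) ((+) x ` L) |L x.
                            L \<in> lin_subspaces 2 \<and> x \<in> orth_compl L}"
      by (rule bdd_aboveI[where M="max Dm (Sup {})"]) (use vb in blast)
  qed
  finally show ?thesis .
qed


lemma span2_expand:
  fixes u e :: "'a::euclidean_space"
  assumes "norm u = 1" "norm e = 1" "u \<bullet> e = 0" "v \<in> span {u, e}"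
  shows "v = (v \<bullet> u) *\<^sub>R u + (v \<bullet> e) *\<^sub>R e"
proof -
  define r where "r = v - (v \<bullet> u) *\<^sub>R u - (v \<bullet> e) *\<^sub>R e"
  have uu: "u \<bullet> u = 1" using assms(1) by (simp add: norm_eq_1)
  have ee: "e \<bullet> e = 1" using assms(2) by (simp add: norm_eq_1)
  have eu: "e \<bullet> u = 0" using assms(3) by (simp add: inner_commute)
  have ru: "r \<bullet> u = 0" unfolding r_def using uu assms(3) eu
    by (simp add: inner_diff_left)
  have re: "r \<bullet> e = 0" unfolding r_def using ee assms(3) eu
    by (simp add: inner_diff_left)
  have rs: "r \<in> span {u, e}" unfolding r_def
    by (intro span_diff span_scale span_base assms(4)) auto
  have "orthogonal r r"
    by (rule orthogonal_to_span[OF rs]) (use ru re in \<open>auto simp: orthogonal_def\<close>)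
  then have "r = 0" by (simp add: orthogonal_def)
  then show ?thesis unfolding r_def by (simp add: algebra_simps)
qed

lemma section_lemma:
  fixes K :: "'a::euclidean_space set"
  assumes conv: "convex K" and Dm: "\<forall>x\<in>K. \<forall>y\<in>K. dist x y \<le> Dm"
    and a: "a \<in> K" and b: "b \<in> K" and u: "norm u = 1" and ab: "b - a = Dm *\<^sub>R u"
    and p: "p \<in> K" and q: "q \<in> K"
    and dl: "\<delta> = norm ((q - p) - (u \<bullet> (q - p)) *\<^sub>R u)" and dpos: "\<delta> > 0"
  shows "\<delta> / 4 \<le> inner_radius 2 K"
proof -
  define \<gamma> where "\<gamma> = u \<bullet> (q - p)"
  define w where "w = (q - p) - \<gamma> *\<^sub>R u"
  define e where "e = (1 / \<delta>) *\<^sub>R w"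
  have uu: "u \<bullet> u = 1" using u by (simp add: norm_eq_1)
  have uw: "u \<bullet> w = 0" unfolding w_def \<gamma>_def using uu by (simp add: inner_diff_right)
  have nw: "norm w = \<delta>" unfolding w_def \<gamma>_def dl ..
  have ue: "u \<bullet> e = 0" unfolding e_def using uw by simp
  have ne: "norm e = 1" unfolding e_def using nw dpos by simp
  have qp: "q - p = \<gamma> *\<^sub>R u + \<delta> *\<^sub>R e" unfolding e_def w_def using dpos by simp
  have nqp: "(norm (q - p))^2 = \<gamma>^2 + \<delta>^2"
  proof -
    have "(norm (q - p))^2 = (norm (\<gamma> *\<^sub>R u))^2 + (norm (\<delta> *\<^sub>R e))^2"
      unfolding qp by (rule norm_add_Pythagorean) (simp add: ue orthogonal_def)
    then show ?thesis using u ne by (simp add: power_mult_distrib)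
  qed
  have Dqp: "norm (q - p) \<le> Dm" using Dm p q by (metis dist_norm)
  have Dd: "\<delta> \<le> Dm"
  proof -
    have "\<delta>^2 \<le> (norm (q - p))^2" using nqp by simp
    then have "\<delta> \<le> norm (q - p)" by (rule power2_le_imp_le) simp
    then show ?thesis using Dqp by simp
  qed
  have Dpos: "Dm > 0" using Dd dpos by simp
  define L where "L = span {u, e}"
  have eu: "e \<noteq> u" using ue uu by auto
  have sL: "subspace L" unfolding L_def by simp
  have indep: "independent {u, e}"
    by (rule pairwise_orthogonal_independent)
       (use ue u ne in \<open>auto simp: pairwise_def orthogonal_def inner_commute\<close>)
  have dimL: "dim L = 2"
    unfolding L_def using dim_span_eq_card_independent[OF indep] eu by simp
  have Lmem: "L \<in> lin_subspaces 2" unfolding lin_subspaces_def using sL dimL by simp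
  have exp: "v = (v \<bullet> u) *\<^sub>R u + (v \<bullet> e) *\<^sub>R e" if "v \<in> L" for v
    using span2_expand[OF u ne ue] that unfolding L_def by blast
  have inL: "\<alpha> *\<^sub>R u + \<beta> *\<^sub>R e \<in> L" for \<alpha> \<beta>
    unfolding L_def by (intro span_add span_scale span_base) auto
  define c0 where "c0 = (1/4) *\<^sub>R (a + b + p + q)"
  define x0 where "x0 = c0 - (c0 \<bullet> u) *\<^sub>R u - (c0 \<bullet> e) *\<^sub>R e"
  have ee: "e \<bullet> e = 1" using ne by (simp add: norm_eq_1)
  have eu': "e \<bullet> u = 0" using ue by (simp add: inner_commute)
  have x0u: "x0 \<bullet> u = 0" unfolding x0_def using uu ue eu' by (simp add: inner_diff_left)
  have x0e: "x0 \<bullet> e = 0" unfolding x0_def using ee ue eu' by (simp add: inner_diff_left)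
  have x0L: "x0 \<in> orth_compl L"
    unfolding orth_compl_def
  proof (intro CollectI ballI)
    fix v assume "v \<in> L"
    then have "x0 \<bullet> v = x0 \<bullet> ((v \<bullet> u) *\<^sub>R u + (v \<bullet> e) *\<^sub>R e)" using exp by metis
    also have "\<dots> = 0" using x0u x0e by (simp add: inner_add_right)
    finally show "x0 \<bullet> v = 0" .
  qed
  have c0A: "c0 \<in> (+) x0 ` L"
  proof -
    have "c0 = x0 + ((c0 \<bullet> u) *\<^sub>R u + (c0 \<bullet> e) *\<^sub>R e)" unfolding x0_def by simp
    then show ?thesis using inL by blast
  qed
  have sub: "cball c0 (\<delta>/4) \<inter> (+) x0 ` L \<subseteq> K"
  proof
    fix y assume y: "y \<in> cball c0 (\<delta>/4) \<inter> (+) x0 ` L"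
    then obtain l where l: "l \<in> L" "y = x0 + l" by blast
    define v where "v = y - c0"
    have vL: "v \<in> L"
    proof -
      have "v = l - ((c0 \<bullet> u) *\<^sub>R u + (c0 \<bullet> e) *\<^sub>R e)" unfolding v_def l(2) x0_def by simp
      then show ?thesis using l(1) inL sL by (simp add: subspace_diff)
    qed
    define \<alpha> where "\<alpha> = v \<bullet> u"
    define \<beta> where "\<beta> = v \<bullet> e"
    have vexp: "v = \<alpha> *\<^sub>R u + \<beta> *\<^sub>R e" unfolding \<alpha>_def \<beta>_def using exp[OF vL] .
    have nv: "(norm v)^2 = \<alpha>^2 + \<beta>^2"
    proof -
      have "(norm v)^2 = (norm (\<alpha> *\<^sub>R u))^2 + (norm (\<beta> *\<^sub>R e))^2"
        unfolding vexp by (rule norm_add_Pythagorean) (simp add: ue orthogonal_def)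
      then show ?thesis using u ne by (simp add: power_mult_distrib)
    qed
    have nv4: "norm v \<le> \<delta>/4" using y unfolding v_def by (simp add: dist_norm norm_minus_commute)
    have ab2: "\<alpha>^2 + \<beta>^2 \<le> (\<delta>/4)^2"
      using nv nv4 by (metis norm_ge_zero power_mono)
    have bb: "\<bar>\<beta>\<bar> \<le> \<delta>/4"
    proof -
      have "\<beta>^2 \<le> (\<delta>/4)^2" using ab2 zero_le_power2[of \<alpha>] by linarith
      then have "\<bar>\<beta>\<bar>^2 \<le> (\<delta>/4)^2" by simp
      then show ?thesis by (rule power2_le_imp_le) (use dpos in simp)
    qed
    have cs: "\<bar>\<alpha>\<bar> * \<delta> + \<bar>\<beta>\<bar> * \<bar>\<gamma>\<bar> \<le> \<delta> * Dm / 4"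
    proof -
      have "(\<bar>\<alpha>\<bar> * \<delta> + \<bar>\<beta>\<bar> * \<bar>\<gamma>\<bar>)^2 \<le> (\<alpha>^2 + \<beta>^2) * (\<delta>^2 + \<gamma>^2)"
      proof -
        have "0 \<le> (\<bar>\<alpha>\<bar> * \<bar>\<gamma>\<bar> - \<bar>\<beta>\<bar> * \<delta>)^2" by simp
        then show ?thesis by (simp add: power2_eq_square algebra_simps)
      qed
      also have "\<dots> \<le> (\<delta>/4)^2 * Dm^2"
      proof (rule mult_mono)
        show "\<delta>^2 + \<gamma>^2 \<le> Dm^2" using nqp Dqp by (metis add.commute norm_ge_zero power_mono)
      qed (use ab2 in auto)
      also have "\<dots> = (\<delta> * Dm / 4)^2" by (simp add: power2_eq_square)
      finally show ?thesis by (rule power2_le_imp_le) (use dpos Dpos in simp)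
    qed
    define t where "t = 2 * \<beta> / \<delta> + 1/2"
    define s where "s = 2 * (\<alpha> - (\<beta> / \<delta>) * \<gamma>) / Dm + 1/2"
    have t01: "0 \<le> t" "t \<le> 1"
    proof -
      have h: "\<bar>2 * \<beta> / \<delta>\<bar> \<le> 1/2" using bb dpos by (simp add: abs_div field_simps)
      have h1: "2 * \<beta> / \<delta> \<le> 1/2" using abs_le_D1[OF h] .
      have h2: "- (2 * \<beta> / \<delta>) \<le> 1/2" using abs_le_D2[OF h] .
      show "0 \<le> t" "t \<le> 1" unfolding t_def using h1 h2 by linarith+
    qed
    have s01: "0 \<le> s" "s \<le> 1"
    proof -
      have "\<bar>\<alpha> - (\<beta> / \<delta>) * \<gamma>\<bar> \<le> \<bar>\<alpha>\<bar> + \<bar>\<beta>\<bar> * \<bar>\<gamma>\<bar> / \<delta>"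
        using dpos by (simp add: abs_mult abs_div abs_triangle_ineq4 order_trans[OF abs_triangle_ineq4])
      also have "\<dots> \<le> Dm / 4" using cs dpos by (simp add: field_simps)
      finally have X: "\<bar>\<alpha> - (\<beta> / \<delta>) * \<gamma>\<bar> \<le> Dm / 4" .
      have ee0: "\<bar>2 * X / Dm\<bar> = 2 * \<bar>X\<bar> / Dm" for X
        using Dpos by (simp add: abs_mult)
      have ee: "\<bar>2 * (\<alpha> - (\<beta> / \<delta>) * \<gamma>) / Dm\<bar> = 2 * \<bar>\<alpha> - (\<beta> / \<delta>) * \<gamma>\<bar> / Dm"
        by (rule ee0)
      have h: "\<bar>2 * (\<alpha> - (\<beta> / \<delta>) * \<gamma>) / Dm\<bar> \<le> 1/2"
        unfolding ee using X Dpos by (simp add: field_simps)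
      have h1: "2 * (\<alpha> - (\<beta> / \<delta>) * \<gamma>) / Dm \<le> 1/2" using abs_le_D1[OF h] .
      have h2: "- (2 * (\<alpha> - (\<beta> / \<delta>) * \<gamma>) / Dm) \<le> 1/2" using abs_le_D2[OF h] .
      show "0 \<le> s" "s \<le> 1" unfolding s_def using h1 h2 by linarith+
    qed
    have q4: "(1/4) *\<^sub>R x + (1/4) *\<^sub>R x = (1/2) *\<^sub>R x" for x :: 'a
      by (simp flip: scaleR_add_left)
    have q4': "(1/4) *\<^sub>R x + ((1/4) *\<^sub>R x + z) = (1/2) *\<^sub>R x + z" for x z :: 'a
      by (simp add: q4 add.assoc[symmetric])
    have bq: "b = a + Dm *\<^sub>R u" using ab by (simp add: algebra_simps)
    have qq: "q = p + \<gamma> *\<^sub>R u + \<delta> *\<^sub>R e" using qp by (simp add: algebra_simps)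
    have lhs: "(1/2) *\<^sub>R ((1 - s) *\<^sub>R a + s *\<^sub>R b) + (1/2) *\<^sub>R ((1 - t) *\<^sub>R p + t *\<^sub>R q)
        = (1/2) *\<^sub>R a + (1/2) *\<^sub>R p + (s * Dm / 2 + t * \<gamma> / 2) *\<^sub>R u + (t * \<delta> / 2) *\<^sub>R e"
      unfolding bq qq by (simp add: algebra_simps)
    have rhs: "y = (1/2) *\<^sub>R a + (1/2) *\<^sub>R p + (Dm / 4 + \<gamma> / 4 + \<alpha>) *\<^sub>R u + (\<delta> / 4 + \<beta>) *\<^sub>R e"
    proof -
      have "y = c0 + v" unfolding v_def by simp
      also have "\<dots> = (1/2) *\<^sub>R a + (1/2) *\<^sub>R p + (Dm / 4 + \<gamma> / 4 + \<alpha>) *\<^sub>R u + (\<delta> / 4 + \<beta>) *\<^sub>R e"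
        unfolding c0_def vexp bq qq by (simp add: algebra_simps q4 q4')
      finally show ?thesis .
    qed
    have co1: "s * Dm / 2 + t * \<gamma> / 2 = Dm / 4 + \<gamma> / 4 + \<alpha>"
      unfolding s_def t_def using dpos Dpos by (simp add: field_simps)
    have co2: "t * \<delta> / 2 = \<delta> / 4 + \<beta>"
      unfolding t_def using dpos by (simp add: field_simps)
    have yeq: "y = (1/2) *\<^sub>R ((1 - s) *\<^sub>R a + s *\<^sub>R b) + (1/2) *\<^sub>R ((1 - t) *\<^sub>R p + t *\<^sub>R q)"
      unfolding lhs rhs co1 co2 ..
    have m1: "(1 - s) *\<^sub>R a + s *\<^sub>R b \<in> K" using convexD[OF conv a b] s01 by simp
    have m2: "(1 - t) *\<^sub>R p + t *\<^sub>R q \<in> K" using convexD[OF conv p q] t01 by simp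
    show "y \<in> K" unfolding yeq using convexD[OF conv m1 m2] by simp
  qed
  show ?thesis
    by (rule inner_ge[OF Dm Lmem x0L _ c0A sub]) (use dpos in simp)
qed

lemma Sup_UNIV_empty_real: "Sup (UNIV :: real set) = Sup ({} :: real set)"
  unfolding Sup_real_def Least_def
proof (rule arg_cong[where f=The], rule ext)
  fix z :: real
  have "\<not> (z + 1 \<le> z)" by simp
  moreover have "\<not> (z \<le> z - 1)" by simp
  ultimately show "((\<forall>x\<in>UNIV. x \<le> z) \<and> (\<forall>y. (\<forall>x\<in>UNIV. x \<le> y) \<longrightarrow> z \<le> y)) =
        ((\<forall>x\<in>{}. x \<le> z) \<and> (\<forall>y. (\<forall>x\<in>{}. x \<le> y) \<longrightarrow> z \<le> y))"
    by blast
qed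

lemma sqrt_const:
  assumes "n \<ge> (2::nat)"
  shows "sqrt (real (n - 1) / (2 * (real (n - 1) + 1))) * 4 = 2 * sqrt 2 * sqrt (real (n - 1) / real n)"
proof -
  have e: "real (n - 1) + 1 = real n" using assms by simp
  have "sqrt (real (n - 1) / (2 * real n)) = sqrt (real (n - 1) / real n) / sqrt 2"
    by (simp add: real_sqrt_divide real_sqrt_mult field_simps)
  moreover have "4 / sqrt 2 = 2 * sqrt (2::real)"
  proof -
    have "sqrt 2 * sqrt 2 = (2::real)" by simp
    then show ?thesis by (simp add: field_simps)
  qed
  ultimately show ?thesis unfolding e by (metis mult.commute times_divide_eq_right)
qed


lemma lin_subspaces_nonempty:
  assumes "DIM('a::euclidean_space) \<ge> 2"
  shows "\<exists>L. L \<in> (lin_subspaces 2 :: 'a set set)"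
proof -
  obtain B where B: "B \<subseteq> (Basis :: 'a set)" "card B = 2"
    using obtain_subset_with_card_n[of 2 "Basis :: 'a set"] assms by auto
  have "independent B" using independent_Basis independent_mono B(1) by blast
  then have "dim (span B) = card B" by (rule dim_span_eq_card_independent)
  then have "dim (span B) = 2" using B(2) by (simp only:)
  then show ?thesis unfolding lin_subspaces_def by (intro exI[of _ "span B"]) simp
qed

theorem theorem1p2:
  fixes K :: "'a::euclidean_space set"
  assumes "DIM('a) \<ge> 2"
    and "convex_body K"
    and "inner_radius 2 K > 0"
  shows "outer_radius (DIM('a) - 1) K / inner_radius 2 K
           \<le> 2 * sqrt 2 * sqrt (real (DIM('a) - 1) / real (DIM('a)))"
proof -
  have cK: "compact K" and convK: "convex K" using assms(2) unfolding convex_body_def by auto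
  obtain e0 :: 'a where e0: "e0 \<in> Basis" by (meson ex_in_conv nonempty_Basis)
  have ne0: "e0 \<noteq> 0" using e0 by auto
  have Hsub: "{x. e \<bullet> x = 0} \<in> lin_subspaces (DIM('a) - 1)" if "e \<noteq> 0" for e :: 'a
    unfolding lin_subspaces_def using that by (simp add: subspace_hyperplane dim_hyperplane)
  have rhs0: "0 \<le> 2 * sqrt 2 * sqrt (real (DIM('a) - 1) / real (DIM('a)))" by simp
  show ?thesis
  proof (cases "K = {}")
    case True
    define U where "U = Sup ({} :: real set)"
    have inr: "inradius_in ({} \<inter> A) A = U" for A :: "'a set"
    proof -
      have E: "{r. 0 \<le> r \<and> (\<exists>c\<in>A. cball c r \<inter> A \<subseteq> {} \<inter> A)} = {}"
      proof (rule equals0I)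
        fix r assume "r \<in> {r. 0 \<le> r \<and> (\<exists>c\<in>A. cball c r \<inter> A \<subseteq> {} \<inter> A)}"
        then obtain c where "0 \<le> r" "c \<in> A" "cball c r \<inter> A \<subseteq> {}" by auto
        then show False by (metis centre_in_cball disjoint_iff subset_empty)
      qed
      show ?thesis unfolding inradius_in_def U_def E by (rule refl)
    qed
    obtain L2 where L2: "L2 \<in> (lin_subspaces 2 :: 'a set set)" using lin_subspaces_nonempty[OF assms(1)] by blast
    have "{inradius_in (K \<inter> (+) x ` L) ((+) x ` L) |L x. L \<in> lin_subspaces 2 \<and> x \<in> orth_compl L} = {U}"
    proof -
      have "(0::'a) \<in> orth_compl L2" unfolding orth_compl_def by simp
      then show ?thesis using L2 unfolding True inr by blast
    qed
    then have ir: "inner_radius 2 K = U" unfolding inner_radius_def by simp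
    have cr: "circumradius_in (proj_onto K L) L = Inf UNIV" if "L \<in> lin_subspaces i" for L :: "'a set" and i
    proof -
      have "0 \<in> L" using that unfolding lin_subspaces_def by (simp add: subspace_0)
      then have "{r. \<exists>c\<in>L. proj_onto K L \<subseteq> cball c r} = UNIV"
        unfolding True proj_onto_def by auto
      then show ?thesis unfolding circumradius_in_def by simp
    qed
    have "(\<lambda>L. circumradius_in (proj_onto K L) L) ` lin_subspaces (DIM('a) - 1) = {Inf UNIV}"
    proof -
      have "(\<lambda>L. circumradius_in (proj_onto K L) L) ` lin_subspaces (DIM('a) - 1) = (\<lambda>L::'a set. Inf UNIV) ` lin_subspaces (DIM('a) - 1)"
        using cr by (simp cong: image_cong)
      moreover have "lin_subspaces (DIM('a) - 1) \<noteq> ({} :: 'a set set)" using Hsub[OF ne0] by blast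
      ultimately show ?thesis by (metis ex_in_conv image_constant)
    qed
    then have "outer_radius (DIM('a) - 1) K = Inf (UNIV :: real set)"
      unfolding outer_radius_def by simp
    also have "\<dots> = - U"
      unfolding Inf_real_def U_def using Sup_UNIV_empty_real by (simp add: surj_def)
    finally have orad: "outer_radius (DIM('a) - 1) K = - U" .
    have "U > 0" using assms(3) ir by simp
    then have "outer_radius (DIM('a) - 1) K / inner_radius 2 K = -1" unfolding orad ir by simp
    then show ?thesis using rhs0 by linarith
  next
    case False
    define Dm where "Dm = diameter K"
    obtain a b where ab: "a \<in> K" "b \<in> K" "dist a b = Dm"
      using diameter_compact_attained[OF cK False] unfolding Dm_def by blast
    have bK: "bounded K" using cK by (rule compact_imp_bounded)
    have Dm: "\<forall>x\<in>K. \<forall>y\<in>K. dist x y \<le> Dm"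
      unfolding Dm_def using diameter_bounded_bound[OF bK] by blast
    obtain u :: 'a where u: "norm u = 1" "b - a = Dm *\<^sub>R u"
    proof (cases "a = b")
      case True
      then have "Dm = 0" using ab by simp
      then show ?thesis using that[of e0] e0 True by simp
    next
      case False
      have "norm (b - a) = Dm" using ab by (simp add: dist_norm norm_minus_commute)
      moreover have "Dm > 0" using False calculation by auto
      ultimately show ?thesis using that[of "(1 / norm (b - a)) *\<^sub>R (b - a)"] by simp
    qed
    have u0: "u \<noteq> 0" using u by auto
    define r2 where "r2 = inner_radius 2 K"
    have r2pos: "r2 > 0" using assms(3) unfolding r2_def .
    define \<pi> where "\<pi> x = x - (u \<bullet> x) *\<^sub>R u" for x
    have uu: "u \<bullet> u = 1" using u by (simp add: norm_eq_1)
    have key: "dist (\<pi> p) (\<pi> q) \<le> 4 * r2" if p: "p \<in> K" and q: "q \<in> K" for p q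
    proof -
      define \<delta> where "\<delta> = norm ((q - p) - (u \<bullet> (q - p)) *\<^sub>R u)"
      have "dist (\<pi> p) (\<pi> q) = \<delta>"
      proof -
        have "\<pi> q - \<pi> p = (q - p) - (u \<bullet> (q - p)) *\<^sub>R u"
          unfolding \<pi>_def by (simp add: inner_diff_right algebra_simps)
        then show ?thesis unfolding \<delta>_def dist_norm by (metis norm_minus_commute)
      qed
      moreover have "\<delta> \<le> 4 * r2"
      proof (cases "\<delta> > 0")
        case True
        have "\<delta> / 4 \<le> r2" unfolding r2_def
          by (rule section_lemma[OF convK Dm ab(1) ab(2) u(1) u(2) p q \<delta>_def True])
        then show ?thesis by simp
      next
        case False
        then show ?thesis using r2pos by simp
      qed
      ultimately show ?thesis by (metis ex_in_conv image_constant)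
    qed
    define S where "S = \<pi> ` K"
    define H where "H = {x. u \<bullet> x = 0}"
    have cS: "compact S" unfolding S_def \<pi>_def
      by (intro compact_continuous_image cK continuous_intros)
    have Sne: "S \<noteq> {}" unfolding S_def using False by simp
    have piH: "\<pi> x \<in> H" for x unfolding \<pi>_def H_def using uu by (simp add: inner_diff_right)
    have SH: "S \<subseteq> H" unfolding S_def using piH by auto
    have adS: "aff_dim S \<le> int (DIM('a) - 1)"
    proof -
      have "aff_dim S \<le> aff_dim H" by (rule aff_dim_subset[OF SH])
      also have "aff_dim H = int DIM('a) - 1" unfolding H_def using u0 by simp
      finally show ?thesis using assms(1) by simp
    qed
    have DS: "\<forall>x\<in>S. \<forall>y\<in>S. dist x y \<le> 4 * r2" unfolding S_def using key by auto
    obtain c where c: "c \<in> convex hull S"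
      "\<forall>s\<in>S. dist c s \<le> sqrt (real (DIM('a) - 1) / (2 * (real (DIM('a) - 1) + 1))) * (4 * r2)"
      using jung[OF cS Sne adS DS] by blast
    have cH: "c \<in> H"
    proof -
      have "convex hull S \<subseteq> H"
        by (rule hull_minimal[OF SH]) (simp add: H_def convex_hyperplane)
      then show ?thesis using c(1) by blast
    qed
    have projS: "proj_onto K H \<subseteq> S"
    proof
      fix y assume "y \<in> proj_onto K H"
      then obtain x where x: "x \<in> K" "y \<in> H" "x - y \<in> orth_compl H"
        unfolding proj_onto_def by blast
      define z where "z = x - y"
      define m where "m = z - (u \<bullet> z) *\<^sub>R u"
      have mH: "m \<in> H" unfolding m_def H_def using uu by (simp add: inner_diff_right)
      have zm: "z \<bullet> m = 0" using x(3) mH unfolding orth_compl_def z_def by blast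
      have mu: "u \<bullet> m = 0" using mH unfolding H_def by simp
      have "m \<bullet> m = z \<bullet> m - (u \<bullet> z) * (u \<bullet> m)"
        unfolding m_def by (simp add: inner_diff_left)
      then have "m \<bullet> m = 0" using zm mu by simp
      then have "m = 0" by simp
      then have zz: "z = (u \<bullet> z) *\<^sub>R u" unfolding m_def by simp
      have "u \<bullet> y = 0" using x(2) unfolding H_def by simp
      then have "u \<bullet> z = u \<bullet> x" unfolding z_def by (simp add: inner_diff_right)
      then have "y = \<pi> x" unfolding \<pi>_def using zz unfolding z_def by (metis add_diff_cancel_left' diff_add_cancel)
      then show "y \<in> S" unfolding S_def using x(1) by blast
    qed
    have Hlin: "H \<in> lin_subspaces (DIM('a) - 1)" unfolding H_def by (rule Hsub[OF u0])
    obtain B where "\<forall>x\<in>K. norm x \<le> B" using bK unfolding bounded_pos by blast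
    then have B: "K \<subseteq> cball 0 B" by auto
    have ole: "outer_radius (DIM('a) - 1) K \<le> sqrt (real (DIM('a) - 1) / (2 * (real (DIM('a) - 1) + 1))) * (4 * r2)"
      by (rule outer_le[OF False B Hlin cH]) (use projS c(2) in \<open>auto simp: subset_iff\<close>)
    have "outer_radius (DIM('a) - 1) K / r2 \<le> sqrt (real (DIM('a) - 1) / (2 * (real (DIM('a) - 1) + 1))) * 4"
      using ole r2pos by (simp add: field_simps)
    also have "\<dots> = 2 * sqrt 2 * sqrt (real (DIM('a) - 1) / real (DIM('a)))"
      by (rule sqrt_const[OF assms(1)])
    finally show ?thesis unfolding r2_def .
  qed
qed

end
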